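(* Let $r\ge 2$ and consider the $\mathfrak{q}(2)$-crystal $\mathbf{B}^{\otimes r}$. Then the $\mathfrak{q}(2)$-connected component $C(1^r)$ of $1^r=1\otimes\cdots\otimes 1$ decomposes, as $\mathfrak{gl}_2$-crystals, as $$C(1^r)=C_{\mathfrak{gl}_2}(1^r)\sqcup C_{\mathfrak{gl}_2}(1^{r-1}2)\cong C_{\mathfrak{gl}_2}(1^{r-1})\otimes \mathbf{B}_{\mathfrak{gl}_2},$$ where $C_{\mathfrak{gl}_2}(1^{r-1})$ is the $\mathfrak{gl}_2$-connected component of $1^{r-1}$ in $\mathbf{B}^{\otimes (r-1)}$, $\mathbf B_{\mathfrak{gl}_2}$ is $\mathbf B$ regarded as a $\mathfrak{gl}_2$-crystal, and $\otimes$ on the right is the tensor product of $\mathfrak{gl}_2$-crystals.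
   Context: Let $P=\mathbb Z e_1\oplus\mathbb Z e_2$, $\alpha_1=e_1-e_2$, and $(k_1,k_2)$ the dual basis of $P^*$ with pairing $\langle\,,\rangle$. A $\mathfrak{gl}_2$-crystal is a set $B$ with maps $\tilde e,\tilde f:B\to B\sqcup\{0\}$, $\varphi,\varepsilon:B\to\mathbb Z\sqcup\{-\infty\}$, $\mathrm{wt}:B\to P$ such that: $\mathrm{wt}(\tilde e b)=\mathrm{wt}(b)+\alpha_1$ if $\tilde eb\ne0$; $\mathrm{wt}(\tilde f b)=\mathrm{wt}(b)-\alpha_1$ if $\tilde fb\neq 0$; $\varphi(b)=\varepsilon(b)+\langle k_1-k_2,\mathrm{wt}(b)\rangle$; $\tilde f b=b'$ iff $b=\tilde e b'$; if $\tilde e b\ne 0$ then $\varepsilon(\tilde eb)=\varepsilon(b)-1$, $\varphi(\tilde e b)=\varphi(b)+1$; if $\tilde fb\ne0$ then $\varepsilon(\tilde fb)=\varepsilon(b)+1$, $\varphi(\tilde fb)=\varphi(b)-1$; if $\varphi(b)=-\infty$ then $\tilde eb=\tilde fb=0$. A $\mathfrak q(2)$-crystal is a $\mathfrak{gl}_2$-crystal with extra maps $\tilde e_{\bar1},\tilde f_{\bar1}:B\to B\sqcup\{0\}$ such that $\mathrm{wt}(B)\subset \mathbb Z_{\ge0}e_1\oplus\mathbb Z_{\ge0}e_2$, $\mathrm{wt}(\tilde e_{\bar1}b)=\mathrm{wt}(b)+\alpha_1$, $\mathrm{wt}(\tilde f_{\bar1}b)=\mathrm{wt}(b)-\alpha_1$,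 and $\tilde f_{\bar1}b=b'$ iff $b=\tilde e_{\bar1}b'$. The tensor product $B_1\otimes B_2$ of $\mathfrak q(2)$-crystals is the set $B_1\times B_2$ with $\mathrm{wt}(b_1\otimes b_2)=\mathrm{wt}(b_1)+\mathrm{wt}(b_2)$, $\varepsilon(b_1\otimes b_2)=\max\{\varepsilon(b_1)-\varphi(b_1)+\varepsilon(b_2),\varepsilon(b_1)\}$, $\varphi(b_1\otimes b_2)=\max\{\varphi(b_1)-\varepsilon(b_2)+\varphi(b_2),\varphi(b_2)\}$, $\tilde e(b_1\otimes b_2)=\tilde eb_1\otimes b_2$ if $\varphi(b_1)\ge\varepsilon(b_2)$ and $=b_1\otimes\tilde e b_2$ otherwise; $\tilde f(b_1\otimes b_2)=\tilde fb_1\otimes b_2$ if $\varphi(b_1)>\varepsilon(b_2)$ and $=b_1\otimes \tilde fb_2$ otherwise; $\tilde e_{\bar1}(b_1\otimes b_2)=\tilde e_{\bar1}b_1\otimes b_2$ and $\tilde f_{\bar1}(b_1\otimes b_2)=\tilde f_{\bar1}b_1\otimes b_2$ if $\langle k_1,\mathrm{wt}(b_2)\rangle=\langle k_2,\mathrm{wt}(b_2)\rangle=0$, and otherwise they act on $b_2$ (with $x\otimes 0=0\otimes x=0$). The tensor product of $\mathfrak{gl}_2$-crystals is given by the same formulas for $\mathrm{wt},\varepsilon,\varphi,\tilde e,\tilde f$. Let $\mathbf B=\{1,2\}$ with $\mathrm{wt}(1)=e_1$, $\mathrm{wt}(2)=e_2$, $\tilde f(1)=2$, $\tilde e(2)=1$,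 $\tilde e(1)=\tilde f(2)=0$, $\varepsilon(1)=0,\varphi(1)=1,\varepsilon(2)=1,\varphi(2)=0$, $\tilde f_{\bar1}(1)=2$, $\tilde e_{\bar1}(2)=1$, $\tilde e_{\bar 1}(1)=\tilde f_{\bar1}(2)=0$. Elements $a_1\otimes\cdots\otimes a_r$ of $\mathbf B^{\otimes r}$ are written as words $a_1\cdots a_r$; $1^r$ denotes $r$ letters $1$, and $1^{r-1}2$ is the word with $r-1$ ones followed by a $2$. For $b$ in a $\mathfrak q(2)$-crystal, $C(b)$ is the connected component of $b$ in the graph with edges $b\to\tilde f b$ and $b\to\tilde f_{\bar1}b$; $C_{\mathfrak{gl}_2}(b)$ is the connected component using only edges $b\to \tilde fb$. *)

theory Defs
  imports Main
begin

text \<open>Weight lattice P = Z e1 + Z e2 is modelled as int \<times> int; the pairing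
  with k1 - k2 is fst - snd, and k1(w) = k2(w) = 0 means w = (0,0).
  The value -\<infinity> of phi/eps never occurs in the crystals considered here
  (B and its tensor powers), so phi, eps are int-valued.
  The value 0 of the Kashiwara operators is modelled by None.\<close>

record 'a gl2crys =
  carrier :: "'a set"
  wt :: "'a \<Rightarrow> int \<times> int"
  eps :: "'a \<Rightarrow> int"
  phi :: "'a \<Rightarrow> int"
  ce :: "'a \<Rightarrow> 'a option"
  cf :: "'a \<Rightarrow> 'a option"

record 'a q2crys = "'a gl2crys" +
  ce1 :: "'a \<Rightarrow> 'a option"
  cf1 :: "'a \<Rightarrow> 'a option"

definition wt_add :: "int \<times> int \<Rightarrow> int \<times> int \<Rightarrow> int \<times> int" where
  "wt_add u v = (fst u + fst v, snd u + snd v)"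

definition Bq :: "nat q2crys" where
  "Bq = \<lparr> carrier = {1, 2},
          wt = (\<lambda>b. if b = 1 then (1, 0) else (0, 1)),
          eps = (\<lambda>b. if b = 1 then 0 else 1),
          phi = (\<lambda>b. if b = 1 then 1 else 0),
          ce = (\<lambda>b. if b = 2 then Some 1 else None),
          cf = (\<lambda>b. if b = 1 then Some 2 else None),
          ce1 = (\<lambda>b. if b = 2 then Some 1 else None),
          cf1 = (\<lambda>b. if b = 1 then Some 2 else None) \<rparr>"

definition Bgl2 :: "nat gl2crys" where
  "Bgl2 = gl2crys.truncate Bq"

definition gl2_tensor :: "('a, 'x) gl2crys_scheme \<Rightarrow> ('b, 'y) gl2crys_scheme \<Rightarrow> ('a \<times> 'b) gl2crys" where
  "gl2_tensor B1 B2 = \<lparr>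
     carrier = carrier B1 \<times> carrier B2,
     wt = (\<lambda>(b1, b2). wt_add (wt B1 b1) (wt B2 b2)),
     eps = (\<lambda>(b1, b2). max (eps B1 b1 - phi B1 b1 + eps B2 b2) (eps B1 b1)),
     phi = (\<lambda>(b1, b2). max (phi B1 b1 - eps B2 b2 + phi B2 b2) (phi B2 b2)),
     ce = (\<lambda>(b1, b2). if phi B1 b1 \<ge> eps B2 b2
                       then map_option (\<lambda>x. (x, b2)) (ce B1 b1)
                       else map_option (\<lambda>y. (b1, y)) (ce B2 b2)),
     cf = (\<lambda>(b1, b2). if phi B1 b1 > eps B2 b2
                       then map_option (\<lambda>x. (x, b2)) (cf B1 b1)
                       else map_option (\<lambda>y. (b1, y)) (cf B2 b2)) \<rparr>"

text \<open>Tensor product of q(2)-crystals B1 \<otimes> B2, where B2 has words (lists) as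
  elements; the element b1 \<otimes> w is encoded as the word b1 # w.\<close>
definition q2_tensor_cons :: "'a q2crys \<Rightarrow> 'a list q2crys \<Rightarrow> 'a list q2crys" where
  "q2_tensor_cons B1 B2 = \<lparr>
     carrier = {b1 # w | b1 w. b1 \<in> carrier B1 \<and> w \<in> carrier B2},
     wt = (\<lambda>v. wt_add (wt B1 (hd v)) (wt B2 (tl v))),
     eps = (\<lambda>v. max (eps B1 (hd v) - phi B1 (hd v) + eps B2 (tl v)) (eps B1 (hd v))),
     phi = (\<lambda>v. max (phi B1 (hd v) - eps B2 (tl v) + phi B2 (tl v)) (phi B2 (tl v))),
     ce = (\<lambda>v. if phi B1 (hd v) \<ge> eps B2 (tl v)
                 then map_option (\<lambda>x. x # tl v) (ce B1 (hd v))
                 else map_option (\<lambda>y. hd v # y) (ce B2 (tl v))),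
     cf = (\<lambda>v. if phi B1 (hd v) > eps B2 (tl v)
                 then map_option (\<lambda>x. x # tl v) (cf B1 (hd v))
                 else map_option (\<lambda>y. hd v # y) (cf B2 (tl v))),
     ce1 = (\<lambda>v. if wt B2 (tl v) = (0, 0)
                 then map_option (\<lambda>x. x # tl v) (ce1 B1 (hd v))
                 else map_option (\<lambda>y. hd v # y) (ce1 B2 (tl v))),
     cf1 = (\<lambda>v. if wt B2 (tl v) = (0, 0)
                 then map_option (\<lambda>x. x # tl v) (cf1 B1 (hd v))
                 else map_option (\<lambda>y. hd v # y) (cf1 B2 (tl v))) \<rparr>"

definition unit_crys :: "'a list q2crys" where
  "unit_crys = \<lparr> carrier = {[]}, wt = (\<lambda>_. (0, 0)), eps = (\<lambda>_. 0), phi = (\<lambda>_. 0),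
                 ce = (\<lambda>_. None), cf = (\<lambda>_. None), ce1 = (\<lambda>_. None), cf1 = (\<lambda>_. None) \<rparr>"

fun Bpow :: "nat \<Rightarrow> nat list q2crys" where
  "Bpow 0 = unit_crys"
| "Bpow (Suc r) = q2_tensor_cons Bq (Bpow r)"

definition q2_edges :: "('a, 'x) q2crys_scheme \<Rightarrow> ('a \<times> 'a) set" where
  "q2_edges C = {(b, b'). b \<in> carrier C \<and> (cf C b = Some b' \<or> cf1 C b = Some b')}"

definition gl2_edges :: "('a, 'x) gl2crys_scheme \<Rightarrow> ('a \<times> 'a) set" where
  "gl2_edges C = {(b, b'). b \<in> carrier C \<and> cf C b = Some b'}"

definition q2_comp :: "('a, 'x) q2crys_scheme \<Rightarrow> 'a \<Rightarrow> 'a set" where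
  "q2_comp C b = {b'. (b, b') \<in> (q2_edges C \<union> (q2_edges C)\<inverse>)\<^sup>*}"

definition gl2_comp :: "('a, 'x) gl2crys_scheme \<Rightarrow> 'a \<Rightarrow> 'a set" where
  "gl2_comp C b = {b'. (b, b') \<in> (gl2_edges C \<union> (gl2_edges C)\<inverse>)\<^sup>*}"

definition gl2_restrict :: "('a, 'x) gl2crys_scheme \<Rightarrow> 'a set \<Rightarrow> 'a gl2crys" where
  "gl2_restrict C S = (gl2crys.truncate C)\<lparr>carrier := S\<rparr>"

definition gl2_iso :: "('a, 'x) gl2crys_scheme \<Rightarrow> ('b, 'y) gl2crys_scheme \<Rightarrow> ('a \<Rightarrow> 'b) \<Rightarrow> bool" where
  "gl2_iso C1 C2 \<psi> \<longleftrightarrow> bij_betw \<psi> (carrier C1) (carrier C2) \<and>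
     (\<forall>b \<in> carrier C1. wt C2 (\<psi> b) = wt C1 b \<and> eps C2 (\<psi> b) = eps C1 b \<and>
        phi C2 (\<psi> b) = phi C1 b \<and> ce C2 (\<psi> b) = map_option \<psi> (ce C1 b) \<and>
        cf C2 (\<psi> b) = map_option \<psi> (cf C1 b))"

end

theory Submission
  imports Defs
begin

lemma Bq_f[simp]:
  "carrier Bq = {1,2}"
  "wt Bq b = (if b = 1 then (1, 0) else (0, 1))"
  "eps Bq b = (if b = 1 then 0 else 1)"
  "phi Bq b = (if b = 1 then 1 else 0)"
  "ce Bq b = (if b = 2 then Some 1 else None)"
  "cf Bq b = (if b = 1 then Some 2 else None)"
  "ce1 Bq b = (if b = 2 then Some 1 else None)"
  "cf1 Bq b = (if b = 1 then Some 2 else None)"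
  by (simp_all add: Bq_def)

lemma Bgl2_f[simp]:
  "carrier Bgl2 = {1,2}"
  "wt Bgl2 = wt Bq" "eps Bgl2 = eps Bq" "phi Bgl2 = phi Bq" "ce Bgl2 = ce Bq" "cf Bgl2 = cf Bq"
  by (simp_all add: Bgl2_def gl2crys.defs)

lemma restrict_f[simp]:
  "carrier (gl2_restrict C S) = S"
  "wt (gl2_restrict C S) = wt C" "eps (gl2_restrict C S) = eps C" "phi (gl2_restrict C S) = phi C"
  "ce (gl2_restrict C S) = ce C" "cf (gl2_restrict C S) = cf C"
  by (simp_all add: gl2_restrict_def gl2crys.defs)

lemma Bpow0[simp]:
  "carrier (Bpow 0) = {[]}" "wt (Bpow 0) v = (0,0)" "eps (Bpow 0) v = 0" "phi (Bpow 0) v = 0"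
  "ce (Bpow 0) v = None" "cf (Bpow 0) v = None" "ce1 (Bpow 0) v = None" "cf1 (Bpow 0) v = None"
  by (simp_all add: unit_crys_def)

lemma BpowS[simp]:
  "carrier (Bpow (Suc n)) = {b1 # w | b1 w. b1 \<in> carrier Bq \<and> w \<in> carrier (Bpow n)}"
  "wt (Bpow (Suc n)) v = wt_add (wt Bq (hd v)) (wt (Bpow n) (tl v))"
  "eps (Bpow (Suc n)) v = max (eps Bq (hd v) - phi Bq (hd v) + eps (Bpow n) (tl v)) (eps Bq (hd v))"
  "phi (Bpow (Suc n)) v = max (phi Bq (hd v) - eps (Bpow n) (tl v) + phi (Bpow n) (tl v)) (phi (Bpow n) (tl v))"
  "ce (Bpow (Suc n)) v = (if phi Bq (hd v) \<ge> eps (Bpow n) (tl v)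
                 then map_option (\<lambda>x. x # tl v) (ce Bq (hd v))
                 else map_option (\<lambda>y. hd v # y) (ce (Bpow n) (tl v)))"
  "cf (Bpow (Suc n)) v = (if phi Bq (hd v) > eps (Bpow n) (tl v)
                 then map_option (\<lambda>x. x # tl v) (cf Bq (hd v))
                 else map_option (\<lambda>y. hd v # y) (cf (Bpow n) (tl v)))"
  "cf1 (Bpow (Suc n)) v = (if wt (Bpow n) (tl v) = (0, 0)
                 then map_option (\<lambda>x. x # tl v) (cf1 Bq (hd v))
                 else map_option (\<lambda>y. hd v # y) (cf1 (Bpow n) (tl v)))"
  by (simp_all add: q2_tensor_cons_def del: Bq_f)

declare Bpow.simps[simp del]

lemma carrier_Bpow: "carrier (Bpow n) = {w. length w = n \<and> set w \<subseteq> {1,2}}"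
proof (induction n)
  case 0 then show ?case by auto
next
  case (Suc n)
  show ?case unfolding BpowS Suc
    by (auto simp: length_Suc_conv)
qed

lemma wt_Bpow: "fst (wt (Bpow n) w) \<ge> 0 \<and> snd (wt (Bpow n) w) \<ge> 0 \<and> fst (wt (Bpow n) w) + snd (wt (Bpow n) w) = int n"
  by (induction n arbitrary: w) (auto simp: wt_add_def)

lemma cf1_Bpow: "length w = Suc n \<Longrightarrow> cf1 (Bpow (Suc n)) w = (if last w = 1 then Some (butlast w @ [2]) else None)"
proof (induction n arbitrary: w)
  case 0 then show ?case by (auto simp: length_Suc_conv)
next
  case (Suc n)
  then obtain a y where w: "w = a # y" "length y = Suc n" by (auto simp: length_Suc_conv)
  have "wt (Bpow (Suc n)) y \<noteq> (0,0)" using wt_Bpow[of "Suc n" y] by auto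
  then show ?case using Suc.IH[OF w(2)] w by auto
qed


lemma cf_inv: "b \<in> carrier (Bpow n) \<Longrightarrow> cf (Bpow n) b = Some b' \<Longrightarrow>
   ce (Bpow n) b' = Some b \<and> eps (Bpow n) b' = eps (Bpow n) b + 1 \<and> phi (Bpow n) b' = phi (Bpow n) b - 1"
proof (induction n arbitrary: b b')
  case 0 then show ?case by simp
next
  case (Suc n)
  from Suc.prems(1) obtain a w where b: "b = a # w" "a \<in> {1,2}" "w \<in> carrier (Bpow n)" by auto
  show ?case
  proof (cases "phi Bq a > eps (Bpow n) w")
    case True
    with Suc.prems(2) b have "a = 1" "b' = 2 # w" by (auto split: if_splits)
    with True b show ?thesis by auto
  next
    case False
    with Suc.prems(2) b obtain w' where w': "cf (Bpow n) w = Some w'" "b' = a # w'" by (auto split: if_splits)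
    from Suc.IH[OF b(3) w'(1)] have IH: "ce (Bpow n) w' = Some w" "eps (Bpow n) w' = eps (Bpow n) w + 1" "phi (Bpow n) w' = phi (Bpow n) w - 1" by auto
    show ?thesis using False b w' IH by auto
  qed
qed

lemma assoc: "wt (Bpow (Suc (length y))) (y @ [b]) = wt_add (wt (Bpow (length y)) y) (wt Bq b) \<and>
  eps (Bpow (Suc (length y))) (y @ [b]) = max (eps (Bpow (length y)) y - phi (Bpow (length y)) y + eps Bq b) (eps (Bpow (length y)) y) \<and>
  phi (Bpow (Suc (length y))) (y @ [b]) = max (phi (Bpow (length y)) y - eps Bq b + phi Bq b) (phi Bq b) \<and>
  ce (Bpow (Suc (length y))) (y @ [b]) = (if phi (Bpow (length y)) y \<ge> eps Bq b
                       then map_option (\<lambda>x. x @ [b]) (ce (Bpow (length y)) y)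
                       else map_option (\<lambda>c. y @ [c]) (ce Bq b)) \<and>
  cf (Bpow (Suc (length y))) (y @ [b]) = (if phi (Bpow (length y)) y > eps Bq b
                       then map_option (\<lambda>x. x @ [b]) (cf (Bpow (length y)) y)
                       else map_option (\<lambda>c. y @ [c]) (cf Bq b))"
proof (induction y)
  case Nil then show ?case by (auto simp: wt_add_def)
next
  case (Cons a y)
  define n where "n = length y"
  define eA where "eA = eps Bq a"
  define pA where "pA = phi Bq a"
  define eY where "eY = eps (Bpow n) y"
  define pY where "pY = phi (Bpow n) y"
  define eb where "eb = eps Bq b"
  define pb where "pb = phi Bq b"
  have IH: "wt (Bpow (Suc n)) (y @ [b]) = wt_add (wt (Bpow n) y) (wt Bq b)"
    "eps (Bpow (Suc n)) (y @ [b]) = max (eY - pY + eb) eY"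
    "phi (Bpow (Suc n)) (y @ [b]) = max (pY - eb + pb) pb"
    "ce (Bpow (Suc n)) (y @ [b]) = (if pY \<ge> eb
                       then map_option (\<lambda>x. x @ [b]) (ce (Bpow n) y)
                       else map_option (\<lambda>c. y @ [c]) (ce Bq b))"
    "cf (Bpow (Suc n)) (y @ [b]) = (if pY > eb
                       then map_option (\<lambda>x. x @ [b]) (cf (Bpow n) y)
                       else map_option (\<lambda>c. y @ [c]) (cf Bq b))"
    using Cons.IH unfolding n_def eY_def pY_def eb_def pb_def by auto
  have L: "length (a # y) = Suc n" by (simp add: n_def)
  have E: "eps (Bpow (Suc n)) (a # y) = max (eA - pA + eY) eA"
    "phi (Bpow (Suc n)) (a # y) = max (pA - eY + pY) pY"
    "ce (Bpow (Suc n)) (a # y) = (if pA \<ge> eY then map_option (\<lambda>x. x # y) (ce Bq a)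
                 else map_option (\<lambda>z. a # z) (ce (Bpow n) y))"
    "cf (Bpow (Suc n)) (a # y) = (if pA > eY then map_option (\<lambda>x. x # y) (cf Bq a)
                 else map_option (\<lambda>z. a # z) (cf (Bpow n) y))"
    "wt (Bpow (Suc n)) (a # y) = wt_add (wt Bq a) (wt (Bpow n) y)"
    by (simp_all add: eA_def pA_def eY_def pY_def del: Bq_f)
  have S: "eps (Bpow (Suc (Suc n))) (a # y @ [b]) = max (eA - pA + max (eY - pY + eb) eY) eA"
    "phi (Bpow (Suc (Suc n))) (a # y @ [b]) = max (pA - max (eY - pY + eb) eY + max (pY - eb + pb) pb) (max (pY - eb + pb) pb)"
    "ce (Bpow (Suc (Suc n))) (a # y @ [b]) = (if pA \<ge> max (eY - pY + eb) eY then map_option (\<lambda>x. x # y @ [b]) (ce Bq a)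
                 else map_option (\<lambda>z. a # z) (ce (Bpow (Suc n)) (y @ [b])))"
    "cf (Bpow (Suc (Suc n))) (a # y @ [b]) = (if pA > max (eY - pY + eb) eY then map_option (\<lambda>x. x # y @ [b]) (cf Bq a)
                 else map_option (\<lambda>z. a # z) (cf (Bpow (Suc n)) (y @ [b])))"
    "wt (Bpow (Suc (Suc n))) (a # y @ [b]) = wt_add (wt Bq a) (wt (Bpow (Suc n)) (y @ [b]))"
    unfolding BpowS list.sel IH[symmetric] eA_def pA_def by (simp_all del: Bq_f)
  have w: "wt (Bpow (Suc (Suc n))) (a # y @ [b]) = wt_add (wt (Bpow (Suc n)) (a # y)) (wt Bq b)"
    unfolding S E IH by (simp add: wt_add_def)
  have e: "eps (Bpow (Suc (Suc n))) (a # y @ [b]) = max (eps (Bpow (Suc n)) (a # y) - phi (Bpow (Suc n)) (a # y) + eb) (eps (Bpow (Suc n)) (a # y))"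
    unfolding S E by linarith
  have p: "phi (Bpow (Suc (Suc n))) (a # y @ [b]) = max (phi (Bpow (Suc n)) (a # y) - eb + pb) pb"
    unfolding S E by linarith
  have c1: "ce (Bpow (Suc (Suc n))) (a # y @ [b]) = (if phi (Bpow (Suc n)) (a # y) \<ge> eb
                       then map_option (\<lambda>x. x @ [b]) (ce (Bpow (Suc n)) (a # y))
                       else map_option (\<lambda>c. (a # y) @ [c]) (ce Bq b))"
  proof -
    consider "pA \<ge> eY" "pA \<ge> eY - pY + eb" | "pA < eY" "pY \<ge> eb" | "pA \<ge> eY" "pA < eY - pY + eb" | "pA < eY" "pY < eb"
      by linarith
    then show ?thesis
    proof cases
      case 1
      then have c: "max (eY - pY + eb) eY \<le> pA" "eb \<le> max (pA - eY + pY) pY" "eY \<le> pA" by linarith+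
      show ?thesis by (simp only: S E IH(4) IH(5) c if_True if_False) (simp add: option.map_comp o_def)
    next
      case 2
      then have c: "\<not> max (eY - pY + eb) eY \<le> pA" "eb \<le> max (pA - eY + pY) pY" "\<not> eY \<le> pA" "eb \<le> pY" by linarith+
      show ?thesis by (simp only: S E IH(4) IH(5) c if_True if_False) (simp add: option.map_comp o_def)
    next
      case 3
      then have c: "\<not> max (eY - pY + eb) eY \<le> pA" "\<not> eb \<le> max (pA - eY + pY) pY" "\<not> eb \<le> pY" by linarith+
      show ?thesis by (simp only: S E IH(4) IH(5) c if_True if_False) (simp add: option.map_comp o_def)
    next
      case 4
      then have c: "\<not> max (eY - pY + eb) eY \<le> pA" "\<not> eb \<le> max (pA - eY + pY) pY" "\<not> eb \<le> pY" by linarith+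
      show ?thesis by (simp only: S E IH(4) IH(5) c if_True if_False) (simp add: option.map_comp o_def)
    qed
  qed
  have c2: "cf (Bpow (Suc (Suc n))) (a # y @ [b]) = (if phi (Bpow (Suc n)) (a # y) > eb
                       then map_option (\<lambda>x. x @ [b]) (cf (Bpow (Suc n)) (a # y))
                       else map_option (\<lambda>c. (a # y) @ [c]) (cf Bq b))"
  proof -
    consider "pA > eY" "pA > eY - pY + eb" | "pA \<le> eY" "pY > eb" | "pA > eY" "pA \<le> eY - pY + eb" | "pA \<le> eY" "pY \<le> eb"
      by linarith
    then show ?thesis
    proof cases
      case 1
      then have c: "max (eY - pY + eb) eY < pA" "eb < max (pA - eY + pY) pY" "eY < pA" by linarith+
      show ?thesis by (simp only: S E IH(4) IH(5) c if_True if_False) (simp add: option.map_comp o_def)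
    next
      case 2
      then have c: "\<not> max (eY - pY + eb) eY < pA" "eb < max (pA - eY + pY) pY" "\<not> eY < pA" "eb < pY" by linarith+
      show ?thesis by (simp only: S E IH(4) IH(5) c if_True if_False) (simp add: option.map_comp o_def)
    next
      case 3
      then have c: "\<not> max (eY - pY + eb) eY < pA" "\<not> eb < max (pA - eY + pY) pY" "\<not> eb < pY" by linarith+
      show ?thesis by (simp only: S E IH(4) IH(5) c if_True if_False) (simp add: option.map_comp o_def)
    next
      case 4
      then have c: "\<not> max (eY - pY + eb) eY < pA" "\<not> eb < max (pA - eY + pY) pY" "\<not> eb < pY" by linarith+
      show ?thesis by (simp only: S E IH(4) IH(5) c if_True if_False) (simp add: option.map_comp o_def)
    qed
  qed
  show ?case using w e p c1 c2 unfolding L eb_def[symmetric] pb_def[symmetric] append_Cons by (intro conjI)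
qed


definition A :: "nat \<Rightarrow> nat \<Rightarrow> nat list" where "A k m = replicate k 2 @ replicate m 1"

lemma A_simps[simp]: "A 0 0 = []" "A 0 (Suc m) = 1 # A 0 m" "A (Suc k) m = 2 # A k m"
  "length (A k m) = k + m"
  by (simp_all add: A_def)

lemma A_carrier: "A k m \<in> carrier (Bpow (k + m))"
  by (auto simp: carrier_Bpow A_def)

lemma A_props: "eps (Bpow (k+m)) (A k m) = int k \<and> phi (Bpow (k+m)) (A k m) = int m \<and>
  cf (Bpow (k+m)) (A k m) = (if m > 0 then Some (A (Suc k) (m-1)) else None) \<and>
  ce (Bpow (k+m)) (A k m) = (if k > 0 then Some (A (k-1) (Suc m)) else None)"
proof (induction k)
  case 0
  then show ?case
  proof (induction m)
    case 0 then show ?case by simp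
  next
    case (Suc m) then show ?case by simp
  qed
next
  case (Suc k)
  then show ?case by (cases k) (auto simp: Suc_diff_1)
qed

lemma A_props': "k + m = n \<Longrightarrow> cf (Bpow n) (A k m) = (if m > 0 then Some (A (Suc k) (m-1)) else None) \<and>
  ce (Bpow n) (A k m) = (if k > 0 then Some (A (k-1) (Suc m)) else None)"
  using A_props by blast

lemma D_props: "k + m = N \<Longrightarrow> 0 < m \<Longrightarrow>
  cf (Bpow (Suc N)) (A k m @ [2]) = (if m > 1 then Some (A (Suc k) (m-1) @ [2]) else None) \<and>
  ce (Bpow (Suc N)) (A k m @ [2]) = (if k > 0 then Some (A (k-1) (Suc m) @ [2]) else None)"
  using assoc[of "A k m" 2] A_props[of k m] by auto


lemma comp_closed: assumes "x \<in> S" "\<And>a b. (a,b)\<in>E \<Longrightarrow> a \<in> S \<longleftrightarrow> b \<in> S"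
  and "(x,y) \<in> (E \<union> E\<inverse>)\<^sup>*" shows "y \<in> S"
  using assms(3)
proof (induction rule: rtrancl_induct)
  case base then show ?case using assms(1) .
next
  case (step y z) then show ?case using assms(2) by blast
qed

lemma comp_mono: "(x,y) \<in> (E \<union> E\<inverse>)\<^sup>* \<Longrightarrow> E \<subseteq> F \<Longrightarrow> (x,y) \<in> (F \<union> F\<inverse>)\<^sup>*"
  by (meson Un_mono converse_mono rtrancl_mono subsetD)

lemma comp_fwd: "(x,y) \<in> E\<^sup>* \<Longrightarrow> (x,y) \<in> (E \<union> E\<inverse>)\<^sup>*"
  by (meson Un_upper1 rtrancl_mono subsetD)

definition G :: "nat \<Rightarrow> nat list set" where "G n = (\<lambda>k. A k (n - k)) ` {..n}"
definition H :: "nat \<Rightarrow> nat list set" where "H N = (\<lambda>k. A k (N - k) @ [2]) ` {..N - 1}"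

lemma G_closed: "(a,b) \<in> gl2_edges (Bpow n) \<Longrightarrow> a \<in> G n \<longleftrightarrow> b \<in> G n"
proof -
  assume e: "(a,b) \<in> gl2_edges (Bpow n)"
  then have ac: "a \<in> carrier (Bpow n)" and cf: "cf (Bpow n) a = Some b" by (auto simp: gl2_edges_def)
  show ?thesis
  proof
    assume "a \<in> G n"
    then obtain k where k: "k \<le> n" "a = A k (n-k)" by (auto simp: G_def)
    with cf A_props'[of k "n-k" n] have "n - k > 0" "b = A (Suc k) (n - k - 1)" by (auto split: if_splits)
    then show "b \<in> G n" unfolding G_def using k
      by (auto intro!: image_eqI[of _ _ "Suc k"] simp: diff_Suc)
  next
    assume "b \<in> G n"
    then obtain k where k: "k \<le> n" "b = A k (n-k)" by (auto simp: G_def)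
    from cf_inv[OF ac cf] have "ce (Bpow n) b = Some a" by simp
    with k A_props'[of k "n-k" n] have "k > 0" "a = A (k - 1) (Suc (n - k))" by (auto split: if_splits)
    then show "a \<in> G n" unfolding G_def using k
      by (auto intro!: image_eqI[of _ _ "k - 1"] simp: Suc_diff_le)
  qed
qed

lemma H_closed: "1 \<le> N \<Longrightarrow> (a,b) \<in> gl2_edges (Bpow (Suc N)) \<Longrightarrow> a \<in> H N \<longleftrightarrow> b \<in> H N"
proof -
  assume N: "1 \<le> N" and e: "(a,b) \<in> gl2_edges (Bpow (Suc N))"
  then have ac: "a \<in> carrier (Bpow (Suc N))" and cf: "cf (Bpow (Suc N)) a = Some b" by (auto simp: gl2_edges_def)
  show ?thesis
  proof
    assume "a \<in> H N"
    then obtain k where k: "k \<le> N - 1" "a = A k (N-k) @ [2]" by (auto simp: H_def)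
    have m: "0 < N - k" using k N by arith
    with N cf D_props[OF _ m, of k N] k have "N - k > 1" "b = A (Suc k) (N - k - 1) @ [2]" by (auto split: if_splits simp del: BpowS)
    then show "b \<in> H N" unfolding H_def using k
      by (intro image_eqI[of _ _ "Suc k"]) auto
  next
    assume "b \<in> H N"
    then obtain k where k: "k \<le> N - 1" "b = A k (N-k) @ [2]" by (auto simp: H_def)
    from cf_inv[OF ac cf] have ceb: "ce (Bpow (Suc N)) b = Some a" by simp
    have m: "0 < N - k" using k N by arith
    with N k ceb D_props[OF _ m, of k N] have "k > 0" "a = A (k - 1) (Suc (N - k)) @ [2]" by (auto split: if_splits simp del: BpowS)
    then show "a \<in> H N" unfolding H_def using k
      by (auto intro!: image_eqI[of _ _ "k - 1"] simp: Suc_diff_le)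
  qed
qed

lemma G_reach: "k \<le> n \<Longrightarrow> (replicate n 1, A k (n - k)) \<in> (gl2_edges (Bpow n))\<^sup>*"
proof (induction k)
  case 0 then show ?case by (simp add: A_def)
next
  case (Suc k)
  have "(A k (n - k), A (Suc k) (n - Suc k)) \<in> gl2_edges (Bpow n)"
    using A_props'[of k "n-k" n] A_carrier[of k "n-k"] Suc.prems
    by (auto simp: gl2_edges_def diff_Suc split: nat.splits)
  with Suc show ?case by (meson Suc_leD rtrancl.simps)
qed

lemma H_reach: "1 \<le> N \<Longrightarrow> k \<le> N - 1 \<Longrightarrow> (A 0 N @ [2], A k (N - k) @ [2]) \<in> (gl2_edges (Bpow (Suc N)))\<^sup>*"
proof (induction k)
  case 0 then show ?case by simp
next
  case (Suc k)
  have c: "A k (N - k) @ [2] \<in> carrier (Bpow (Suc N))"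
    using A_carrier[of k "N-k"] Suc.prems by (auto simp: carrier_Bpow)
  have "(A k (N - k) @ [2], A (Suc k) (N - Suc k) @ [2]) \<in> gl2_edges (Bpow (Suc N))"
    using D_props[of k "N-k" N] c Suc.prems
    by (auto simp: gl2_edges_def diff_Suc split: nat.splits simp del: BpowS)
  with Suc show ?case by (meson Suc_leD rtrancl.simps)
qed

lemma G_comp: "gl2_comp (Bpow n) (replicate n 1) = G n"
proof
  show "gl2_comp (Bpow n) (replicate n 1) \<subseteq> G n"
    unfolding gl2_comp_def
  proof
    fix y assume "y \<in> {b'. (replicate n 1, b') \<in> (gl2_edges (Bpow n) \<union> (gl2_edges (Bpow n))\<inverse>)\<^sup>*}"
    then have y: "(replicate n 1, y) \<in> (gl2_edges (Bpow n) \<union> (gl2_edges (Bpow n))\<inverse>)\<^sup>*" by simp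
    have r0: "replicate n 1 \<in> G n" unfolding G_def by (rule image_eqI[of _ _ 0]) (simp_all add: A_def)
    show "y \<in> G n" by (rule comp_closed[OF r0 G_closed y])
  qed
  show "G n \<subseteq> gl2_comp (Bpow n) (replicate n 1)"
  proof
    fix y assume "y \<in> G n"
    then obtain k where k: "k \<le> n" "y = A k (n-k)" unfolding G_def by blast
    show "y \<in> gl2_comp (Bpow n) (replicate n 1)"
      unfolding gl2_comp_def k(2) using comp_fwd[OF G_reach[OF k(1)]] by (rule CollectI)
  qed
qed

lemma H_comp: "1 \<le> N \<Longrightarrow> gl2_comp (Bpow (Suc N)) (replicate N 1 @ [2]) = H N"
proof
  assume N: "1 \<le> N"
  have s: "replicate N 1 @ [2] = A 0 N @ [2]" by (simp add: A_def)
  show "gl2_comp (Bpow (Suc N)) (replicate N 1 @ [2]) \<subseteq> H N"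
    unfolding gl2_comp_def
  proof
    fix y assume "y \<in> {b'. (replicate N 1 @ [2], b') \<in> (gl2_edges (Bpow (Suc N)) \<union> (gl2_edges (Bpow (Suc N)))\<inverse>)\<^sup>*}"
    then have y: "(replicate N 1 @ [2], y) \<in> (gl2_edges (Bpow (Suc N)) \<union> (gl2_edges (Bpow (Suc N)))\<inverse>)\<^sup>*" by simp
    have r0: "replicate N 1 @ [2] \<in> H N" unfolding H_def s by (rule image_eqI[of _ _ 0]) simp_all
    show "y \<in> H N" by (rule comp_closed[OF r0 H_closed[OF N] y])
  qed
  show "H N \<subseteq> gl2_comp (Bpow (Suc N)) (replicate N 1 @ [2])"
  proof
    fix y assume "y \<in> H N"
    then obtain k where k: "k \<le> N - 1" "y = A k (N-k) @ [2]" unfolding H_def by blast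
    show "y \<in> gl2_comp (Bpow (Suc N)) (replicate N 1 @ [2])"
      unfolding gl2_comp_def k(2) s using comp_fwd[OF H_reach[OF N k(1)]] by (rule CollectI)
  qed
qed


lemma A_app1: "A k m @ [1] = A k (Suc m)" by (simp add: A_def replicate_append_same)
lemma A_app2: "A k 0 @ [2] = A (Suc k) 0" by (simp add: A_def replicate_append_same)

lemma G_len: "x \<in> G n \<Longrightarrow> length x = n" by (auto simp: G_def)

definition T :: "nat \<Rightarrow> nat list set" where "T N = (\<lambda>(x,c). x @ [c]) ` (G N \<times> {1,2})"

lemma T_memI: "k \<le> N \<Longrightarrow> c \<in> {1,2} \<Longrightarrow> A k (N - k) @ [c] \<in> T N"
  unfolding T_def G_def by (rule image_eqI[of _ _ "(A k (N - k), c)"]) auto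

lemma T_eq: "1 \<le> N \<Longrightarrow> G (Suc N) \<union> H N = T N"
proof
  assume N: "1 \<le> N"
  show "G (Suc N) \<union> H N \<subseteq> T N"
  proof
    fix w assume "w \<in> G (Suc N) \<union> H N"
    then consider k where "k \<le> Suc N" "w = A k (Suc N - k)" | k where "k \<le> N - 1" "w = A k (N - k) @ [2]"
      unfolding G_def H_def by blast
    then show "w \<in> T N"
    proof cases
      case 1
      show ?thesis
      proof (cases "k = Suc N")
        case True
        then have "w = A N (N - N) @ [2]" using 1 A_app2[of N] by simp
        then show ?thesis using T_memI[of N N 2] by simp
      next
        case False
        then have "w = A k (N - k) @ [1]" using 1 A_app1[of k "N-k"] by (simp add: Suc_diff_le)
        then show ?thesis using T_memI[of k N 1] 1 False by simp
      qed
    next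
      case 2
      then show ?thesis using T_memI[of k N 2] by simp
    qed
  qed
  show "T N \<subseteq> G (Suc N) \<union> H N"
  proof
    fix w assume "w \<in> T N"
    then obtain x c where xc: "x \<in> G N" "c \<in> {1,2}" "w = x @ [c]" unfolding T_def by auto
    then obtain k where "k \<le> N" "x = A k (N - k)" unfolding G_def by auto
    with xc have k: "k \<le> N" "c \<in> {1,2}" "w = A k (N - k) @ [c]" by auto
    show "w \<in> G (Suc N) \<union> H N"
    proof (cases "c = 1")
      case True
      then have "w = A k (Suc N - k)" using k A_app1[of k "N-k"] by (simp add: Suc_diff_le)
      moreover have "A k (Suc N - k) \<in> G (Suc N)" unfolding G_def using k by simp
      ultimately show ?thesis by simp
    next
      case False
      then have c: "c = 2" using k by simp
      show ?thesis
      proof (cases "k = N")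
        case True
        then have "w = A (Suc N) (Suc N - Suc N)" using k c A_app2[of N] by simp
        moreover have "A (Suc N) (Suc N - Suc N) \<in> G (Suc N)" unfolding G_def by blast
        ultimately show ?thesis by simp
      next
        case False
        then have "k \<le> N - 1" using k by simp
        then have "A k (N - k) @ [2] \<in> H N" unfolding H_def by blast
        then show ?thesis using k c by simp
      qed
    qed
  qed
qed

lemma GH_disj: "1 \<le> N \<Longrightarrow> G (Suc N) \<inter> H N = {}"
proof (rule ccontr)
  assume N: "1 \<le> N" and "G (Suc N) \<inter> H N \<noteq> {}"
  then obtain k j where k: "k \<le> Suc N" "j \<le> N - 1" "A k (Suc N - k) = A j (N - j) @ [2]"
    unfolding G_def H_def by auto
  show False
  proof (cases "k = Suc N")
    case True
    have "1 \<in> set (A j (N - j) @ [2])" using k N by (auto simp: A_def)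
    moreover have "1 \<notin> set (A k (Suc N - k))" using True by (simp add: A_def)
    ultimately show False using k by simp
  next
    case False
    then have "A k (Suc N - k) = A k (N - k) @ [1]" using k A_app1[of k "N-k"] by (simp add: Suc_diff_le)
    then show False using k(3) by simp
  qed
qed

lemma T_closed: "(a,b) \<in> q2_edges (Bpow (Suc N)) \<Longrightarrow> 1 \<le> N \<Longrightarrow> a \<in> T N \<longleftrightarrow> b \<in> T N"
proof -
  assume e: "(a,b) \<in> q2_edges (Bpow (Suc N))" and N: "1 \<le> N"
  then have ac: "a \<in> carrier (Bpow (Suc N))" and cf: "cf (Bpow (Suc N)) a = Some b \<or> cf1 (Bpow (Suc N)) a = Some b"
    by (auto simp: q2_edges_def simp del: BpowS)
  show ?thesis
  proof (cases "cf (Bpow (Suc N)) a = Some b")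
    case True
    then have "(a,b) \<in> gl2_edges (Bpow (Suc N))" using ac by (simp add: gl2_edges_def)
    then have "a \<in> G (Suc N) \<longleftrightarrow> b \<in> G (Suc N)" "a \<in> H N \<longleftrightarrow> b \<in> H N"
      using G_closed H_closed[OF N] by blast+
    then show ?thesis using T_eq[OF N] by blast
  next
    case False
    with cf have c1: "cf1 (Bpow (Suc N)) a = Some b" by simp
    have la: "length a = Suc N" using ac by (simp only: carrier_Bpow) simp
    have ab: "last a = 1" "b = butlast a @ [2]" using c1 cf1_Bpow[OF la] by (auto split: if_splits)
    have a_eq: "a = butlast a @ [1]" using ab(1) la
      by (metis append_butlast_last_id list.size(3) nat.distinct(1))
    show ?thesis
    proof
      assume "a \<in> T N"
      then obtain x c where "x \<in> G N" "a = x @ [c]" unfolding T_def by auto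
      then show "b \<in> T N" using ab unfolding T_def by auto
    next
      assume "b \<in> T N"
      then obtain x c where "x \<in> G N" "b = x @ [c]" unfolding T_def by auto
      then have "butlast a = x" using ab by simp
      then show "a \<in> T N" using a_eq \<open>x \<in> G N\<close> unfolding T_def by force
    qed
  qed
qed

lemma q2_comp_T: "1 \<le> N \<Longrightarrow> q2_comp (Bpow (Suc N)) (replicate (Suc N) 1) = T N"
proof
  assume N: "1 \<le> N"
  have r: "replicate (Suc N) 1 = A 0 (N - 0) @ [1]" by (simp add: A_def replicate_append_same)
  have rG: "replicate (Suc N) 1 \<in> T N" unfolding r by (rule T_memI) simp_all
  show "q2_comp (Bpow (Suc N)) (replicate (Suc N) 1) \<subseteq> T N"
    unfolding q2_comp_def
  proof
    fix y assume "y \<in> {b'. (replicate (Suc N) 1, b') \<in> (q2_edges (Bpow (Suc N)) \<union> (q2_edges (Bpow (Suc N)))\<inverse>)\<^sup>*}"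
    then have y: "(replicate (Suc N) 1, y) \<in> (q2_edges (Bpow (Suc N)) \<union> (q2_edges (Bpow (Suc N)))\<inverse>)\<^sup>*" by (rule CollectD)
    show "y \<in> T N" by (rule comp_closed[OF rG T_closed[OF _ N] y])
  qed
  have sub: "gl2_edges (Bpow (Suc N)) \<subseteq> q2_edges (Bpow (Suc N))"
    unfolding gl2_edges_def q2_edges_def by blast
  have G1: "G (Suc N) \<subseteq> q2_comp (Bpow (Suc N)) (replicate (Suc N) 1)"
  proof
    fix y assume "y \<in> G (Suc N)"
    then have "y \<in> gl2_comp (Bpow (Suc N)) (replicate (Suc N) 1)" using G_comp[of "Suc N"] by simp
    then have "(replicate (Suc N) 1, y) \<in> (gl2_edges (Bpow (Suc N)) \<union> (gl2_edges (Bpow (Suc N)))\<inverse>)\<^sup>*"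
      unfolding gl2_comp_def by (rule CollectD)
    from comp_mono[OF this sub] show "y \<in> q2_comp (Bpow (Suc N)) (replicate (Suc N) 1)"
      unfolding q2_comp_def by (rule CollectI)
  qed
  have e1: "(replicate (Suc N) 1, replicate N 1 @ [2]) \<in> q2_edges (Bpow (Suc N))"
  proof -
    have c: "replicate (Suc N) 1 \<in> carrier (Bpow (Suc N))" unfolding carrier_Bpow by (auto simp: in_set_replicate)
    have "cf1 (Bpow (Suc N)) (replicate (Suc N) 1) = Some (replicate N 1 @ [2])"
    proof -
      have rr: "replicate (Suc N) (1::nat) = replicate N 1 @ [1]" by (simp add: replicate_append_same)
      show ?thesis unfolding rr by (subst cf1_Bpow) simp_all
    qed
    then show ?thesis using c unfolding q2_edges_def by blast
  qed
  have H1: "H N \<subseteq> q2_comp (Bpow (Suc N)) (replicate (Suc N) 1)"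
  proof
    fix y assume "y \<in> H N"
    then have "y \<in> gl2_comp (Bpow (Suc N)) (replicate N 1 @ [2])" using H_comp[OF N] by simp
    then have "(replicate N 1 @ [2], y) \<in> (gl2_edges (Bpow (Suc N)) \<union> (gl2_edges (Bpow (Suc N)))\<inverse>)\<^sup>*"
      unfolding gl2_comp_def by (rule CollectD)
    from comp_mono[OF this sub]
    have "(replicate N 1 @ [2], y) \<in> (q2_edges (Bpow (Suc N)) \<union> (q2_edges (Bpow (Suc N)))\<inverse>)\<^sup>*" .
    moreover have "(replicate (Suc N) 1, replicate N 1 @ [2]) \<in> q2_edges (Bpow (Suc N)) \<union> (q2_edges (Bpow (Suc N)))\<inverse>"
      using e1 by (rule UnI1)
    ultimately have "(replicate (Suc N) 1, y) \<in> (q2_edges (Bpow (Suc N)) \<union> (q2_edges (Bpow (Suc N)))\<inverse>)\<^sup>*"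
      by (rule converse_rtrancl_into_rtrancl[rotated])
    then show "y \<in> q2_comp (Bpow (Suc N)) (replicate (Suc N) 1)"
      unfolding q2_comp_def by (rule CollectI)
  qed
  show "T N \<subseteq> q2_comp (Bpow (Suc N)) (replicate (Suc N) 1)"
    using G1 H1 T_eq[OF N] by blast
qed

lemma iso: "gl2_iso (gl2_restrict (Bpow (Suc N)) (T N))
                      (gl2_tensor (gl2_restrict (Bpow N) (G N)) Bgl2) (\<lambda>w. (butlast w, last w))"
  unfolding gl2_iso_def
proof (intro conjI ballI)
  show "bij_betw (\<lambda>w. (butlast w, last w)) (carrier (gl2_restrict (Bpow (Suc N)) (T N)))
     (carrier (gl2_tensor (gl2_restrict (Bpow N) (G N)) Bgl2))"
    by (rule bij_betw_byWitness[where f' = "\<lambda>(x,c). x @ [c]"])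
       (auto simp: T_def gl2_tensor_def)
next
  fix w assume "w \<in> carrier (gl2_restrict (Bpow (Suc N)) (T N))"
  then obtain x c where x: "x \<in> G N" "w = x @ [c]" by (auto simp: T_def)
  have l: "length x = N" using G_len[OF x(1)] .
  note as = assoc[of x c, unfolded l]
  show "wt (gl2_tensor (gl2_restrict (Bpow N) (G N)) Bgl2) (butlast w, last w) = wt (gl2_restrict (Bpow (Suc N)) (T N)) w"
    using as x by (simp add: gl2_tensor_def del: BpowS)
  show "eps (gl2_tensor (gl2_restrict (Bpow N) (G N)) Bgl2) (butlast w, last w) = eps (gl2_restrict (Bpow (Suc N)) (T N)) w"
    using as x by (simp add: gl2_tensor_def del: BpowS Bq_f)
  show "phi (gl2_tensor (gl2_restrict (Bpow N) (G N)) Bgl2) (butlast w, last w) = phi (gl2_restrict (Bpow (Suc N)) (T N)) w"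
    using as x by (simp add: gl2_tensor_def del: BpowS Bq_f)
  show "ce (gl2_tensor (gl2_restrict (Bpow N) (G N)) Bgl2) (butlast w, last w) = map_option (\<lambda>w. (butlast w, last w)) (ce (gl2_restrict (Bpow (Suc N)) (T N)) w)"
    using as x by (simp add: gl2_tensor_def option.map_comp o_def del: BpowS Bq_f)
  show "cf (gl2_tensor (gl2_restrict (Bpow N) (G N)) Bgl2) (butlast w, last w) = map_option (\<lambda>w. (butlast w, last w)) (cf (gl2_restrict (Bpow (Suc N)) (T N)) w)"
    using as x by (simp add: gl2_tensor_def option.map_comp o_def del: BpowS Bq_f)
qed

theorem proposition3p4:
  fixes r :: nat
  assumes "2 \<le> r"
  shows "q2_comp (Bpow r) (replicate r 1)
           = gl2_comp (Bpow r) (replicate r 1) \<union> gl2_comp (Bpow r) (replicate (r - 1) 1 @ [2])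
       \<and> gl2_comp (Bpow r) (replicate r 1) \<inter> gl2_comp (Bpow r) (replicate (r - 1) 1 @ [2]) = {}
       \<and> (\<exists>\<psi>. gl2_iso (gl2_restrict (Bpow r) (q2_comp (Bpow r) (replicate r 1)))
                      (gl2_tensor (gl2_restrict (Bpow (r - 1)) (gl2_comp (Bpow (r - 1)) (replicate (r - 1) 1)))
                                  Bgl2) \<psi>)"
proof -
  obtain N where r: "r = Suc N" and N: "1 \<le> N" using assms by (cases r) auto
  show ?thesis unfolding r diff_Suc_1 q2_comp_T[OF N] G_comp H_comp[OF N]
    using T_eq[OF N] GH_disj[OF N] iso[of N] by blast
qed

end
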